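(* For each $t\in\{0,1,\dots,T\}$ and every state $(\bm{x},k)=((x_1,\dots,x_N),k)\in\mathbb{Z}^N\times\mathbb{N}_0$, $$V^N_t(\bm{x},k)=\sum_{i=1}^N\tilde V^{N,i}_t(x_i,k).$$
   Context: Spare parts setting. Fix integers $N\ge1$, $T\ge1$, reals $\alpha_0,\beta_0>0$, and for each $i\in\mathcal{N}=\{1,\dots,N\}$ unit costs $c_v^i,c_h^i,c_b^i>0$ (transportation, holding, backorder) with $c_b^i>c_v^i$. $\mathbb{N}_0=\{0,1,2,\dots\}$, $y^+=\max(y,0)$. For real $r>0$ and $p\in(0,1)$, $NB(r,p)$ is the distribution on $\mathbb{N}_0$ with $P(n)=\frac{\Gamma(n+r)}{\Gamma(r)n!}p^r(1-p)^n$; $NB(0,p)$ is the point mass at $0$. For $t\in\{0,\dots,T\}$ let $p_t=\frac{\beta_0+Nt}{\beta_0+Nt+1}$. At epoch $t$ and statistic $k$ let $Z\sim NB(\alpha_0+k,p_t)$, $K\sim NB((N-1)(\alpha_0+k),p_t)$ independent, and set $C_i(a,x,k)=c_v^i(a-x)+c_h^i\mathbb{E}[(a-Z)^+]+c_b^i\mathbb{E}[(Z-a)^+]$ for integers $a\ge x$. Original MDP: state $(\bm{x},k)\in\mathbb{Z}^N\times\mathbb{N}_0$ ($x_i$ = net inventory of warehouse $i$, $k$ = total demand observed); actions $\bm{a}\in\mathbb{Z}^N$ with $a_i\ge x_i$; $V^N_T\equiv0$ and for $t=T-1,\dots,0$: $V^N_t(\bm{x},k)=\min_{\bm{a}}\{\sum_iC_i(a_i,x_i,k)+\mathbb{E}[V^N_{t+1}(\bm{a}-\bm{Z},k+\sum_iZ_i)]\}$,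 with $Z_1,\dots,Z_N$ i.i.d. $NB(\alpha_0+k,p_t)$. Alternative MDP: $\tilde V^{N,i}_T\equiv0$ and for $t=T-1,\dots,0$, $(x,k)\in\mathbb{Z}\times\mathbb{N}_0$: $\tilde V^{N,i}_t(x,k)=\min_{a\in\mathbb{Z},a\ge x}\{C_i(a,x,k)+\mathbb{E}[\tilde V^{N,i}_{t+1}(a-Z,k+Z+K)]\}$. *)

theory Defs
  imports "HOL-Analysis.Analysis"
begin

definition nb :: "real \<Rightarrow> real \<Rightarrow> nat \<Rightarrow> real" where
  "nb r p n = (if r = 0 then (if n = 0 then 1 else 0)
     else Gamma (real n + r) / (Gamma r * fact n) * p powr r * (1 - p) ^ n)"

definition ptime :: "nat \<Rightarrow> real \<Rightarrow> nat \<Rightarrow> real" where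
  "ptime N beta0 t = (beta0 + real N * real t) / (beta0 + real N * real t + 1)"

definition E_nb :: "real \<Rightarrow> real \<Rightarrow> (nat \<Rightarrow> ennreal) \<Rightarrow> ennreal" where
  "E_nb r p f = (\<integral>\<^sup>+ n. ennreal (nb r p n) * f n \<partial>count_space UNIV)"

definition Ccost :: "(nat \<Rightarrow> real) \<Rightarrow> (nat \<Rightarrow> real) \<Rightarrow> (nat \<Rightarrow> real) \<Rightarrow> real \<Rightarrow> real
    \<Rightarrow> nat \<Rightarrow> int \<Rightarrow> int \<Rightarrow> nat \<Rightarrow> ennreal" where
  "Ccost cv ch cb alpha0 p i a x k =
     ennreal (cv i * real_of_int (a - x))
     + ennreal (ch i) * E_nb (alpha0 + real k) p (\<lambda>z. ennreal (real_of_int (max (a - int z) 0)))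
     + ennreal (cb i) * E_nb (alpha0 + real k) p (\<lambda>z. ennreal (real_of_int (max (int z - a) 0)))"

text \<open>Original MDP, indexed by number of remaining periods n (epoch t = T - n).
  Warehouses are indexed by {1..N}; a state vector is a function nat => int of which
  only the coordinates 1..N are relevant.\<close>
primrec Worig :: "nat \<Rightarrow> nat \<Rightarrow> real \<Rightarrow> real \<Rightarrow> (nat \<Rightarrow> real) \<Rightarrow> (nat \<Rightarrow> real) \<Rightarrow> (nat \<Rightarrow> real)
    \<Rightarrow> nat \<Rightarrow> (nat \<Rightarrow> int) \<Rightarrow> nat \<Rightarrow> ennreal" where
  "Worig N T alpha0 beta0 cv ch cb 0 x k = 0"
| "Worig N T alpha0 beta0 cv ch cb (Suc n) x k =
     (let p = ptime N beta0 (T - Suc n) in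
      INF a \<in> {a :: nat \<Rightarrow> int. \<forall>i\<in>{1..N}. x i \<le> a i}.
        (\<Sum>i\<in>{1..N}. Ccost cv ch cb alpha0 p i (a i) (x i) k)
        + (\<integral>\<^sup>+ z. (\<Prod>i\<in>{1..N}. ennreal (nb (alpha0 + real k) p (z i)))
               * Worig N T alpha0 beta0 cv ch cb n (\<lambda>i. a i - int (z i)) (k + (\<Sum>i\<in>{1..N}. z i))
            \<partial>count_space (PiE {1..N} (\<lambda>_. UNIV))))"

definition Vorig :: "nat \<Rightarrow> nat \<Rightarrow> real \<Rightarrow> real \<Rightarrow> (nat \<Rightarrow> real) \<Rightarrow> (nat \<Rightarrow> real) \<Rightarrow> (nat \<Rightarrow> real)
    \<Rightarrow> nat \<Rightarrow> (nat \<Rightarrow> int) \<Rightarrow> nat \<Rightarrow> ennreal" where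
  "Vorig N T alpha0 beta0 cv ch cb t x k = Worig N T alpha0 beta0 cv ch cb (T - t) x k"

primrec Walt :: "nat \<Rightarrow> nat \<Rightarrow> real \<Rightarrow> real \<Rightarrow> (nat \<Rightarrow> real) \<Rightarrow> (nat \<Rightarrow> real) \<Rightarrow> (nat \<Rightarrow> real)
    \<Rightarrow> nat \<Rightarrow> nat \<Rightarrow> int \<Rightarrow> nat \<Rightarrow> ennreal" where
  "Walt N T alpha0 beta0 cv ch cb i 0 x k = 0"
| "Walt N T alpha0 beta0 cv ch cb i (Suc n) x k =
     (let p = ptime N beta0 (T - Suc n) in
      INF a \<in> {a :: int. x \<le> a}.
        Ccost cv ch cb alpha0 p i a x k
        + (\<integral>\<^sup>+ zw. ennreal (nb (alpha0 + real k) p (fst zw))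
                 * ennreal (nb (real (N - 1) * (alpha0 + real k)) p (snd zw))
               * Walt N T alpha0 beta0 cv ch cb i n (a - int (fst zw)) (k + fst zw + snd zw)
            \<partial>count_space UNIV))"

definition Valt :: "nat \<Rightarrow> nat \<Rightarrow> real \<Rightarrow> real \<Rightarrow> (nat \<Rightarrow> real) \<Rightarrow> (nat \<Rightarrow> real) \<Rightarrow> (nat \<Rightarrow> real)
    \<Rightarrow> nat \<Rightarrow> nat \<Rightarrow> int \<Rightarrow> nat \<Rightarrow> ennreal" where
  "Valt N T alpha0 beta0 cv ch cb i t x k = Walt N T alpha0 beta0 cv ch cb i (T - t) x k"

end

theory Submission
  imports Defs
begin

lemma nb_alt:
  assumes "r \<ge> 0" "p > 0"
  shows "nb r p n = pochhammer r n / fact n * p powr r * (1-p)^n"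
proof (cases "r = 0")
  case True thus ?thesis using assms by (simp add: nb_def pochhammer_0_left)
next
  case False
  hence "r > 0" using assms by simp
  hence "r \<notin> \<int>\<^sub>\<le>\<^sub>0" by (auto elim!: nonpos_Ints_cases)
  hence "pochhammer r n = Gamma (r + of_nat n) / Gamma r" by (rule pochhammer_Gamma)
  thus ?thesis using False by (simp add: nb_def add.commute)
qed

lemma poch_nonneg: "(r::real) \<ge> 0 \<Longrightarrow> pochhammer r n \<ge> 0"
  by (cases "r = 0") (auto simp: pochhammer_0_left intro!: pochhammer_nonneg)

lemma nb_nonneg:
  assumes "r \<ge> 0" "p > 0" "p < 1"
  shows "nb r p n \<ge> 0"
  using assms by (auto simp: nb_alt intro!: mult_nonneg_nonneg divide_nonneg_nonneg poch_nonneg)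

lemma nb_conv:
  assumes "r \<ge> 0" "s \<ge> 0" "p > 0" "p < 1"
  shows "(\<Sum>u\<le>m. nb r p u * nb s p (m-u)) = nb (r+s) p m"
proof -
  have "(\<Sum>u\<le>m. nb r p u * nb s p (m-u)) =
     (\<Sum>u\<le>m. of_nat (m choose u) * pochhammer r u * pochhammer s (m - u)) / fact m * p powr (r+s) * (1-p)^m"
    unfolding sum_divide_distrib sum_distrib_right
  proof (rule sum.cong[OF refl])
    fix u assume u: "u \<in> {..m}"
    hence "(1-p)^u * (1-p)^(m-u) = (1-p)^m" by (simp add: power_add[symmetric])
    moreover have "real (m choose u) = fact m / (fact u * fact (m-u))"
      using u by (simp add: binomial_fact)
    ultimately show "nb r p u * nb s p (m-u) = of_nat (m choose u) * pochhammer r u * pochhammer s (m - u) / fact m * p powr (r+s) * (1-p)^m"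
      using assms by (simp add: nb_alt powr_add field_simps)
  qed
  also have "\<dots> = nb (r+s) p m"
    using assms by (simp add: nb_alt pochhammer_binomial_sum[symmetric])
  finally show ?thesis .
qed

lemma nn_fiber:
  fixes \<phi> :: "'a \<Rightarrow> 'b::countable" and f :: "'a \<Rightarrow> ennreal"
  shows "(\<integral>\<^sup>+z. f z \<partial>count_space A) = (\<integral>\<^sup>+y. (\<integral>\<^sup>+z. f z \<partial>count_space {z\<in>A. \<phi> z = y}) \<partial>count_space UNIV)"
proof -
  have "(\<integral>\<^sup>+z. f z \<partial>count_space A) = (\<integral>\<^sup>+z. (\<integral>\<^sup>+y. f z * indicator {\<phi> z} y \<partial>count_space UNIV) \<partial>count_space A)"
    by (intro nn_integral_cong) (simp add: nn_integral_cmult_indicator)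
  also have "\<dots> = (\<integral>\<^sup>+y. (\<integral>\<^sup>+z. f z * indicator {\<phi> z} y \<partial>count_space A) \<partial>count_space UNIV)"
    by (rule nn_integral_count_space_nn_integral) auto
  also have "\<dots> = (\<integral>\<^sup>+y. (\<integral>\<^sup>+z. f z \<partial>count_space {z\<in>A. \<phi> z = y}) \<partial>count_space UNIV)"
  proof (intro nn_integral_cong)
    fix y
    have "(\<integral>\<^sup>+z. f z * indicator {\<phi> z} y \<partial>count_space A) = (\<integral>\<^sup>+z. f z * indicator {\<phi> z} y \<partial>count_space {z\<in>A. \<phi> z = y})"
      by (rule nn_integral_count_space_eq) auto
    also have "\<dots> = (\<integral>\<^sup>+z. f z \<partial>count_space {z\<in>A. \<phi> z = y})"
      by (intro nn_integral_cong) auto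
    finally show "(\<integral>\<^sup>+z. f z * indicator {\<phi> z} y \<partial>count_space A) = (\<integral>\<^sup>+z. f z \<partial>count_space {z\<in>A. \<phi> z = y})" .
  qed
  finally show ?thesis .
qed

lemma bij_upd:
  assumes "j \<notin> S"
  shows "bij_betw (\<lambda>w. w(j:=u)) {w\<in>PiE S (\<lambda>_. UNIV::nat set). (\<Sum>l\<in>S. w l) = n}
           {w\<in>PiE (insert j S) (\<lambda>_. UNIV). w j = u \<and> (\<Sum>l\<in>S. w l) = n}"
proof (rule bij_betw_byWitness[where f' = "\<lambda>w. w(j:=undefined)"])
  have s: "(\<Sum>l\<in>S. (w(j:=v)) l) = (\<Sum>l\<in>S. w l)" for w :: "_ \<Rightarrow> nat" and v
    using assms by (intro sum.cong) auto
  show "\<forall>a\<in>{w \<in> PiE S (\<lambda>_. UNIV). (\<Sum>l\<in>S. w l) = n}. (a(j := u))(j := undefined) = a"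
    using assms by (auto simp: PiE_iff extensional_def fun_eq_iff)
  show "\<forall>a'\<in>{w\<in>PiE (insert j S) (\<lambda>_. UNIV). w j = u \<and> (\<Sum>l\<in>S. w l) = n}. (a'(j := undefined))(j := u) = a'"
    by (auto simp: fun_eq_iff)
  show "(\<lambda>w. w(j:=u)) ` {w \<in> PiE S (\<lambda>_. UNIV). (\<Sum>l\<in>S. w l) = n} \<subseteq> {w\<in>PiE (insert j S) (\<lambda>_. UNIV). w j = u \<and> (\<Sum>l\<in>S. w l) = n}"
    using assms s by (auto simp: PiE_iff extensional_def)
  show "(\<lambda>w. w(j:=undefined)) ` {w\<in>PiE (insert j S) (\<lambda>_. UNIV). w j = u \<and> (\<Sum>l\<in>S. w l) = n} \<subseteq> {w \<in> PiE S (\<lambda>_. UNIV). (\<Sum>l\<in>S. w l) = n}"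
    using assms s by (auto simp: PiE_iff extensional_def)
qed


lemma nb_conv_Pi:
  assumes "finite S" "r \<ge> 0" "0 < p" "p < 1"
  shows "(\<integral>\<^sup>+w. (\<Prod>j\<in>S. ennreal (nb r p (w j))) \<partial>count_space {w\<in>PiE S (\<lambda>_. UNIV::nat set). (\<Sum>j\<in>S. w j) = m})
         = ennreal (nb (real (card S) * r) p m)"
  using assms(1)
proof (induction S arbitrary: m rule: finite_induct)
  case empty
  show ?case
  proof (cases "m = 0")
    case True
    hence "{w\<in>PiE {} (\<lambda>_. UNIV::nat set). (\<Sum>j\<in>{}. w j) = m} = {\<lambda>_. undefined}" by auto
    thus ?thesis using True by (simp add: nb_def)
  next
    case False
    hence "{w\<in>PiE {} (\<lambda>_. UNIV::nat set). (\<Sum>j\<in>{}. w j) = m} = {}" by auto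
    thus ?thesis using False by (simp add: nb_def)
  qed
next
  case (insert j S)
  let ?A = "{w\<in>PiE (insert j S) (\<lambda>_. UNIV::nat set). (\<Sum>j\<in>insert j S. w j) = m}"
  let ?f = "\<lambda>w. (\<Prod>j\<in>insert j S. ennreal (nb r p (w j)))"
  have nn: "\<And>q n. q \<ge> 0 \<Longrightarrow> nb q p n \<ge> 0" using assms nb_nonneg by auto
  have "(\<integral>\<^sup>+w. ?f w \<partial>count_space ?A) = (\<integral>\<^sup>+u. (\<integral>\<^sup>+w. ?f w \<partial>count_space {w\<in>?A. w j = u}) \<partial>count_space UNIV)"
    by (rule nn_fiber)
  also have "\<dots> = (\<integral>\<^sup>+u. (if u \<le> m then ennreal (nb r p u) * ennreal (nb (real (card S) * r) p (m - u)) else 0) \<partial>count_space UNIV)"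
  proof (intro nn_integral_cong)
    fix u :: nat
    show "(\<integral>\<^sup>+w. ?f w \<partial>count_space {w\<in>?A. w j = u}) = (if u \<le> m then ennreal (nb r p u) * ennreal (nb (real (card S) * r) p (m - u)) else 0)"
    proof (cases "u \<le> m")
      case True
      have eq: "{w\<in>?A. w j = u} = {w\<in>PiE (insert j S) (\<lambda>_. UNIV). w j = u \<and> (\<Sum>l\<in>S. w l) = m - u}"
        using insert.hyps True by auto
      have "(\<integral>\<^sup>+w. ?f w \<partial>count_space {w\<in>?A. w j = u}) = (\<integral>\<^sup>+w. ?f (w(j:=u)) \<partial>count_space {w\<in>PiE S (\<lambda>_. UNIV::nat set). (\<Sum>l\<in>S. w l) = m - u})"
        unfolding eq by (rule nn_integral_bij_count_space[OF bij_upd[OF insert.hyps(2)], symmetric])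
      also have "\<dots> = (\<integral>\<^sup>+w. ennreal (nb r p u) * (\<Prod>l\<in>S. ennreal (nb r p (w l))) \<partial>count_space {w\<in>PiE S (\<lambda>_. UNIV::nat set). (\<Sum>l\<in>S. w l) = m - u})"
      proof (intro nn_integral_cong)
        fix w :: "'a \<Rightarrow> nat"
        have "(\<Prod>l\<in>S. ennreal (nb r p ((w(j:=u)) l))) = (\<Prod>l\<in>S. ennreal (nb r p (w l)))"
          using insert.hyps by (intro prod.cong) auto
        thus "?f (w(j:=u)) = ennreal (nb r p u) * (\<Prod>l\<in>S. ennreal (nb r p (w l)))"
          using insert.hyps by simp
      qed
      also have "\<dots> = ennreal (nb r p u) * ennreal (nb (real (card S) * r) p (m - u))"
        by (simp add: nn_integral_cmult insert.IH)
      finally show ?thesis using True by simp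
    next
      case False
      have e: "{w\<in>?A. w j = u} = {}"
      proof (rule ccontr)
        assume "{w\<in>?A. w j = u} \<noteq> {}"
        then obtain w where "w \<in> ?A" "w j = u" by blast
        hence "u \<le> m" using insert.hyps by auto
        thus False using False by simp
      qed
      show ?thesis unfolding e using False by (simp add: nn_integral_count_space_finite)
    qed
  qed
  also have "\<dots> = (\<Sum>u\<le>m. ennreal (nb r p u) * ennreal (nb (real (card S) * r) p (m - u)))"
    by (subst nn_integral_count_space'[where A="{..m}"]) auto
  also have "\<dots> = ennreal (\<Sum>u\<le>m. nb r p u * nb (real (card S) * r) p (m - u))"
    using assms nn by (subst sum_ennreal[symmetric]) (auto simp: ennreal_mult)
  also have "\<dots> = ennreal (nb (r + real (card S) * r) p m)"
    using assms by (subst nb_conv) auto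
  also have "r + real (card S) * r = real (card (insert j S)) * r"
    using insert.hyps by (simp add: algebra_simps)
  finally show ?case .
qed


lemma INF_add_const_set:
  fixes f :: "'a \<Rightarrow> ennreal"
  assumes "A \<noteq> {}"
  shows "(INF i\<in>A. f i + c) = (INF i\<in>A. f i) + c"
  using continuous_at_Inf_mono[of "\<lambda>x. x + c" "f`A"]
  using continuous_add[of "at_right (Inf (f ` A))" "\<lambda>x. x" "\<lambda>x. c"] assms
  by (auto simp: mono_def image_comp)

lemma INF_const_add_set:
  fixes f :: "'a \<Rightarrow> ennreal"
  assumes "A \<noteq> {}"
  shows "(INF i\<in>A. c + f i) = c + (INF i\<in>A. f i)"
  using INF_add_const_set[OF assms, of f c] by (simp add: ac_simps)

lemma ne_imp: "x \<in> A \<Longrightarrow> A \<noteq> {}" by auto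

lemma INF_sum_sep:
  fixes F :: "'i \<Rightarrow> 'b \<Rightarrow> ennreal"
  assumes "finite S" "\<And>i. i \<in> S \<Longrightarrow> B i \<noteq> {}"
  shows "(INF a \<in> {a. \<forall>i\<in>S. a i \<in> B i}. \<Sum>i\<in>S. F i (a i)) = (\<Sum>i\<in>S. INF b \<in> B i. F i b)"
  using assms
proof (induction S rule: finite_induct)
  case empty
  show ?case by simp
next
  case (insert j S)
  let ?A = "{a. \<forall>i\<in>S. a i \<in> B i}"
  let ?G = "\<lambda>a. \<Sum>i\<in>S. F i (a i)"
  have ne: "?A \<noteq> {}"
  proof -
    have "(\<lambda>i. SOME b. b \<in> B i) \<in> ?A" using insert.prems by (auto intro: some_in_eq[THEN iffD2])
    thus ?thesis by (rule ne_imp)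
  qed
  have Bj: "B j \<noteq> {}" using insert.prems by auto
  have "(INF a \<in> {a. \<forall>i\<in>insert j S. a i \<in> B i}. \<Sum>i\<in>insert j S. F i (a i))
        = (INF a \<in> {a. \<forall>i\<in>insert j S. a i \<in> B i}. F j (a j) + ?G a)"
    using insert.hyps by simp
  also have "\<dots> = (INF b\<in>B j. INF a\<in>?A. F j b + ?G a)"
  proof (rule antisym)
    show "(INF a \<in> {a. \<forall>i\<in>insert j S. a i \<in> B i}. F j (a j) + ?G a) \<le> (INF b\<in>B j. INF a\<in>?A. F j b + ?G a)"
    proof (intro INF_greatest)
      fix b a assume b: "b \<in> B j" and a: "a \<in> ?A"
      have m: "a(j:=b) \<in> {a. \<forall>i\<in>insert j S. a i \<in> B i}" using a b by auto
      have g: "?G (a(j:=b)) = ?G a" using insert.hyps by (intro sum.cong) auto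
      have "(INF a \<in> {a. \<forall>i\<in>insert j S. a i \<in> B i}. F j (a j) + ?G a) \<le> F j ((a(j:=b)) j) + ?G (a(j:=b))"
        by (rule INF_lower[OF m])
      thus "(INF a \<in> {a. \<forall>i\<in>insert j S. a i \<in> B i}. F j (a j) + ?G a) \<le> F j b + ?G a"
        by (simp only: g fun_upd_same)
    qed
    show "(INF b\<in>B j. INF a\<in>?A. F j b + ?G a) \<le> (INF a \<in> {a. \<forall>i\<in>insert j S. a i \<in> B i}. F j (a j) + ?G a)"
    proof (intro INF_greatest)
      fix a assume a: "a \<in> {a. \<forall>i\<in>insert j S. a i \<in> B i}"
      hence aj: "a j \<in> B j" and aA: "a \<in> ?A" by auto
      show "(INF b\<in>B j. INF a\<in>?A. F j b + ?G a) \<le> F j (a j) + ?G a"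
        by (rule INF_lower2[OF aj], rule INF_lower[OF aA])
    qed
  qed
  also have "\<dots> = (INF b\<in>B j. F j b + (INF a\<in>?A. ?G a))"
    by (intro INF_cong refl INF_const_add_set ne)
  also have "\<dots> = (INF b\<in>B j. F j b) + (INF a\<in>?A. ?G a)"
    by (rule INF_add_const_set[OF Bj])
  also have "\<dots> = (\<Sum>i\<in>insert j S. INF b \<in> B i. F i b)"
    using insert by simp
  finally show ?case .
qed


lemma marg:
  fixes W :: "nat \<Rightarrow> nat \<Rightarrow> ennreal"
  assumes S: "finite S" "i \<in> S" and r: "r \<ge> 0" and p: "0 < p" "p < 1"
  shows "(\<integral>\<^sup>+z. (\<Prod>j\<in>S. ennreal (nb r p (z j))) * W (z i) (\<Sum>j\<in>S. z j) \<partial>count_space (PiE S (\<lambda>_. UNIV)))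
       = (\<integral>\<^sup>+zw. ennreal (nb r p (fst zw)) * ennreal (nb (real (card S - 1) * r) p (snd zw)) * W (fst zw) (fst zw + snd zw) \<partial>count_space UNIV)"
proof -
  let ?S' = "S - {i}"
  have ins: "insert i ?S' = S" using S by auto
  have cS: "card ?S' = card S - 1" using S by simp
  let ?f = "\<lambda>z. (\<Prod>j\<in>S. ennreal (nb r p (z j))) * W (z i) (\<Sum>j\<in>S. z j)"
  let ?g = "\<lambda>zw. ennreal (nb r p (fst zw)) * ennreal (nb (real (card S - 1) * r) p (snd zw)) * W (fst zw) (fst zw + snd zw)"
  have "(\<integral>\<^sup>+z. ?f z \<partial>count_space (PiE S (\<lambda>_. UNIV))) =
      (\<integral>\<^sup>+u. (\<integral>\<^sup>+z. ?f z \<partial>count_space {z\<in>PiE S (\<lambda>_. UNIV). z i = u}) \<partial>count_space UNIV)"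
    by (rule nn_fiber)
  also have "\<dots> = (\<integral>\<^sup>+u. (\<integral>\<^sup>+m. ?g (u,m) \<partial>count_space UNIV) \<partial>count_space UNIV)"
  proof (intro nn_integral_cong)
    fix u :: nat
    have "(\<integral>\<^sup>+z. ?f z \<partial>count_space {z\<in>PiE S (\<lambda>_. UNIV). z i = u}) =
       (\<integral>\<^sup>+m. (\<integral>\<^sup>+z. ?f z \<partial>count_space {z\<in>{z\<in>PiE S (\<lambda>_. UNIV). z i = u}. (\<Sum>j\<in>?S'. z j) = m}) \<partial>count_space UNIV)"
      by (rule nn_fiber)
    also have "\<dots> = (\<integral>\<^sup>+m. ?g (u,m) \<partial>count_space UNIV)"
    proof (intro nn_integral_cong)
      fix m :: nat
      let ?F = "{z\<in>{z\<in>PiE S (\<lambda>_. UNIV). z i = u}. (\<Sum>j\<in>?S'. z j) = m}"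
      have Feq: "?F = {w\<in>PiE (insert i ?S') (\<lambda>_. UNIV). w i = u \<and> (\<Sum>l\<in>?S'. w l) = m}"
        using ins by auto
      have "(\<integral>\<^sup>+z. ?f z \<partial>count_space ?F) =
          (\<integral>\<^sup>+z. (ennreal (nb r p u) * W u (u + m)) * (\<Prod>j\<in>?S'. ennreal (nb r p (z j))) \<partial>count_space ?F)"
      proof (intro nn_integral_cong)
        fix z assume "z \<in> space (count_space ?F)"
        hence z: "z i = u" "(\<Sum>j\<in>?S'. z j) = m" by auto
        have "(\<Prod>j\<in>S. ennreal (nb r p (z j))) = ennreal (nb r p (z i)) * (\<Prod>j\<in>?S'. ennreal (nb r p (z j)))"
          using S by (simp add: prod.remove)
        moreover have "(\<Sum>j\<in>S. z j) = z i + (\<Sum>j\<in>?S'. z j)"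
          using S by (simp add: sum.remove)
        ultimately show "?f z = (ennreal (nb r p u) * W u (u + m)) * (\<Prod>j\<in>?S'. ennreal (nb r p (z j)))"
          using z by (simp add: ac_simps)
      qed
      also have "\<dots> = (ennreal (nb r p u) * W u (u + m)) * (\<integral>\<^sup>+z. (\<Prod>j\<in>?S'. ennreal (nb r p (z j))) \<partial>count_space ?F)"
        by (rule nn_integral_cmult) simp
      also have "(\<integral>\<^sup>+z. (\<Prod>j\<in>?S'. ennreal (nb r p (z j))) \<partial>count_space ?F) =
          (\<integral>\<^sup>+w. (\<Prod>j\<in>?S'. ennreal (nb r p ((w(i:=u)) j))) \<partial>count_space {w\<in>PiE ?S' (\<lambda>_. UNIV::nat set). (\<Sum>l\<in>?S'. w l) = m})"
        unfolding Feq by (rule nn_integral_bij_count_space[OF bij_upd, symmetric]) simp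
      also have "\<dots> = (\<integral>\<^sup>+w. (\<Prod>j\<in>?S'. ennreal (nb r p (w j))) \<partial>count_space {w\<in>PiE ?S' (\<lambda>_. UNIV::nat set). (\<Sum>l\<in>?S'. w l) = m})"
        by (intro nn_integral_cong prod.cong) auto
      also have "\<dots> = ennreal (nb (real (card S - 1) * r) p m)"
        using nb_conv_Pi[of ?S' r p m] S r p cS by simp
      finally show "(\<integral>\<^sup>+z. ?f z \<partial>count_space ?F) = ?g (u,m)"
        by (simp add: ac_simps)
    qed
    finally show "(\<integral>\<^sup>+z. ?f z \<partial>count_space {z\<in>PiE S (\<lambda>_. UNIV). z i = u}) = (\<integral>\<^sup>+m. ?g (u,m) \<partial>count_space UNIV)" .
  qed
  also have "\<dots> = (\<integral>\<^sup>+u. (\<integral>\<^sup>+zw. ?g zw \<partial>count_space {zw\<in>UNIV. fst zw = u}) \<partial>count_space UNIV)"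
  proof (intro nn_integral_cong)
    fix u :: nat
    have "bij_betw (Pair u) UNIV {zw\<in>UNIV. fst zw = u}"
      by (auto simp: bij_betw_def inj_on_def image_def)
    thus "(\<integral>\<^sup>+m. ?g (u,m) \<partial>count_space UNIV) = (\<integral>\<^sup>+zw. ?g zw \<partial>count_space {zw\<in>UNIV. fst zw = u})"
      by (rule nn_integral_bij_count_space)
  qed
  also have "\<dots> = (\<integral>\<^sup>+zw. ?g zw \<partial>count_space UNIV)"
    by (rule nn_fiber[symmetric])
  finally show ?thesis .
qed


lemma main:
  assumes N: "N \<ge> 1" and a0: "alpha0 > 0" and b0: "beta0 > 0"
  shows "Worig N T alpha0 beta0 cv ch cb n x k = (\<Sum>i\<in>{1..N}. Walt N T alpha0 beta0 cv ch cb i n (x i) k)"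
proof (induction n arbitrary: x k)
  case 0 show ?case by simp
next
  case (Suc n)
  define p where "p = ptime N beta0 (T - Suc n)"
  define q where "q = beta0 + real N * real (T - Suc n)"
  have q: "q > 0" unfolding q_def using b0 by (intro add_pos_nonneg) auto
  have pq: "p = q / (q + 1)" unfolding p_def ptime_def q_def by simp
  have p: "0 < p" "p < 1" using q unfolding pq by auto
  define r where "r = alpha0 + real k"
  have r: "r \<ge> 0" using a0 unfolding r_def by simp
  define H where "H i b = (\<integral>\<^sup>+zw. ennreal (nb r p (fst zw)) * ennreal (nb (real (N - 1) * r) p (snd zw))
        * Walt N T alpha0 beta0 cv ch cb i n (b - int (fst zw)) (k + fst zw + snd zw) \<partial>count_space UNIV)" for i b
  define C where "C i b = Ccost cv ch cb alpha0 p i b (x i) k" for i b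
  have Walt_eq: "Walt N T alpha0 beta0 cv ch cb i (Suc n) (x i) k = (INF b\<in>{b. x i \<le> b}. C i b + H i b)" for i
    by (simp add: Let_def p_def r_def H_def C_def)
  have int_eq: "(\<integral>\<^sup>+z. (\<Prod>i\<in>{1..N}. ennreal (nb (alpha0 + real k) p (z i)))
               * Worig N T alpha0 beta0 cv ch cb n (\<lambda>i. a i - int (z i)) (k + (\<Sum>i\<in>{1..N}. z i))
            \<partial>count_space (PiE {1..N} (\<lambda>_. UNIV))) = (\<Sum>i\<in>{1..N}. H i (a i))" for a
  proof -
    have "(\<integral>\<^sup>+z. (\<Prod>i\<in>{1..N}. ennreal (nb (alpha0 + real k) p (z i)))
               * Worig N T alpha0 beta0 cv ch cb n (\<lambda>i. a i - int (z i)) (k + (\<Sum>i\<in>{1..N}. z i))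
            \<partial>count_space (PiE {1..N} (\<lambda>_. UNIV)))
      = (\<integral>\<^sup>+z. (\<Sum>i\<in>{1..N}. (\<Prod>j\<in>{1..N}. ennreal (nb r p (z j)))
               * Walt N T alpha0 beta0 cv ch cb i n (a i - int (z i)) (k + (\<Sum>j\<in>{1..N}. z j)))
            \<partial>count_space (PiE {1..N} (\<lambda>_. UNIV)))"
      by (intro nn_integral_cong) (simp add: Suc.IH r_def sum_distrib_left)
    also have "\<dots> = (\<Sum>i\<in>{1..N}. (\<integral>\<^sup>+z. (\<Prod>j\<in>{1..N}. ennreal (nb r p (z j)))
               * Walt N T alpha0 beta0 cv ch cb i n (a i - int (z i)) (k + (\<Sum>j\<in>{1..N}. z j))
            \<partial>count_space (PiE {1..N} (\<lambda>_. UNIV))))"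
      by (rule nn_integral_sum) simp
    also have "\<dots> = (\<Sum>i\<in>{1..N}. H i (a i))"
    proof (intro sum.cong refl)
      fix i assume i: "i \<in> {1..N}"
      have "(\<integral>\<^sup>+z. (\<Prod>j\<in>{1..N}. ennreal (nb r p (z j)))
               * Walt N T alpha0 beta0 cv ch cb i n (a i - int (z i)) (k + (\<Sum>j\<in>{1..N}. z j))
            \<partial>count_space (PiE {1..N} (\<lambda>_. UNIV))) =
         (\<integral>\<^sup>+zw. ennreal (nb r p (fst zw)) * ennreal (nb (real (card {1..N} - 1) * r) p (snd zw))
            * Walt N T alpha0 beta0 cv ch cb i n (a i - int (fst zw)) (k + (fst zw + snd zw)) \<partial>count_space UNIV)"
        using marg[of "{1..N}" i r p "\<lambda>u s. Walt N T alpha0 beta0 cv ch cb i n (a i - int u) (k + s)"] i r p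
        by simp
      also have "\<dots> = H i (a i)"
        unfolding H_def by (simp add: add.assoc)
      finally show "(\<integral>\<^sup>+z. (\<Prod>j\<in>{1..N}. ennreal (nb r p (z j)))
               * Walt N T alpha0 beta0 cv ch cb i n (a i - int (z i)) (k + (\<Sum>j\<in>{1..N}. z j))
            \<partial>count_space (PiE {1..N} (\<lambda>_. UNIV))) = H i (a i)" .
    qed
    finally show ?thesis .
  qed
  have "Worig N T alpha0 beta0 cv ch cb (Suc n) x k =
      (INF a \<in> {a. \<forall>i\<in>{1..N}. a i \<in> {b. x i \<le> b}}. (\<Sum>i\<in>{1..N}. C i (a i) + H i (a i)))"
    unfolding Worig.simps Let_def p_def[symmetric] int_eq by (simp add: C_def sum.distrib)
  also have "\<dots> = (\<Sum>i\<in>{1..N}. INF b\<in>{b. x i \<le> b}. C i b + H i b)"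
    by (rule INF_sum_sep) auto
  also have "\<dots> = (\<Sum>i\<in>{1..N}. Walt N T alpha0 beta0 cv ch cb i (Suc n) (x i) k)"
    by (rule sum.cong[OF refl], rule Walt_eq[symmetric])
  finally show ?case .
qed

theorem theorem2:
  fixes N T :: nat and alpha0 beta0 :: real and cv ch cb :: "nat \<Rightarrow> real"
    and t :: nat and x :: "nat \<Rightarrow> int" and k :: nat
  assumes "N \<ge> 1" and "T \<ge> 1" and "alpha0 > 0" and "beta0 > 0"
    and "\<forall>i\<in>{1..N}. cv i > 0 \<and> ch i > 0 \<and> cb i > 0 \<and> cb i > cv i"
    and "t \<le> T"
  shows "Vorig N T alpha0 beta0 cv ch cb t x k
         = (\<Sum>i\<in>{1..N}. Valt N T alpha0 beta0 cv ch cb i t (x i) k)"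
  unfolding Vorig_def Valt_def using main[OF assms(1,3,4)] by blast

end
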